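(* Let $\mathcal{L}_q$ be any projective plane of order $q\geq 3$. Then for every sufficiently large integer $n$, $R(P^{(q+1)}_{n,q},\mathcal{L}_q)\geq \left\lfloor\frac{q+2}{q+1}(n-1)\right\rfloor$.
   Context: A projective plane $\mathcal{L}_q$ of order $q$ is a $(q+1)$-regular $(q+1)$-uniform hypergraph on $q^2+q+1$ vertices in which every pair of vertices lies in a unique edge. For $k$-uniform hypergraphs $G,H$, $R(G,H)$ is the least $N$ such that every red/blue colouring of the edges of $K^{(k)}_N$ contains a red copy of $G$ or a blue copy of $H$. The tight path $P^{(k)}_{n,k-1}$ ($n\ge k$) has vertices $v_1,\dots,v_n$ and edges $\{v_i,\dots,v_{i+k-1}\}$ for $i\in[n-k+1]$. *)

theory Defs
  imports Complex_Main "HOL-Library.Extended_Nat"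
begin

definition projective_plane :: "nat \<Rightarrow> 'a set \<Rightarrow> 'a set set \<Rightarrow> bool" where
  "projective_plane q V E \<longleftrightarrow>
     finite V \<and> card V = q^2 + q + 1 \<and>
     (\<forall>e\<in>E. e \<subseteq> V \<and> card e = q + 1) \<and>
     (\<forall>v\<in>V. card {e\<in>E. v \<in> e} = q + 1) \<and>
     (\<forall>u\<in>V. \<forall>v\<in>V. u \<noteq> v \<longrightarrow> (\<exists>!e. e \<in> E \<and> u \<in> e \<and> v \<in> e))"

definition tight_path :: "nat \<Rightarrow> nat \<Rightarrow> nat set \<times> nat set set" where
  "tight_path k n = ({1..n}, {{i..i+k-1} | i. 1 \<le> i \<and> i + k - 1 \<le> n})"

text \<open>A copy of G in the complete hypergraph on {0..<N} all of whose edges receive colour col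
  under the colouring c (True = red, False = blue).\<close>
definition has_mono_copy :: "nat \<Rightarrow> ('a set \<times> 'a set set) \<Rightarrow> (nat set \<Rightarrow> bool) \<Rightarrow> bool \<Rightarrow> bool" where
  "has_mono_copy N G c col \<longleftrightarrow>
     (\<exists>f. inj_on f (fst G) \<and> f ` fst G \<subseteq> {0..<N} \<and> (\<forall>e\<in>snd G. c (f ` e) = col))"

text \<open>Ramsey number (infinity if no such N exists).\<close>
definition ramsey_number :: "('a set \<times> 'a set set) \<Rightarrow> ('b set \<times> 'b set set) \<Rightarrow> enat" where
  "ramsey_number G H = Inf {enat N | N. \<forall>c :: nat set \<Rightarrow> bool.
       has_mono_copy N G c True \<or> has_mono_copy N H c False}"

end

theory Submission
  imports Defs
begin

lemma plane_no_exact_one: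
  assumes P: "projective_plane q V E" and q: "q \<ge> 1" and S: "S \<subseteq> V"
    and one: "\<forall>e\<in>E. card (e \<inter> S) = 1"
  shows False
proof -
  have fin: "finite V" and cV: "card V = q^2 + q + 1"
    and eV: "\<forall>e\<in>E. e \<subseteq> V \<and> card e = q + 1"
    and deg: "\<forall>v\<in>V. card {e\<in>E. v \<in> e} = q + 1"
    and uniq: "\<forall>u\<in>V. \<forall>v\<in>V. u \<noteq> v \<longrightarrow> (\<exists>!e. e \<in> E \<and> u \<in> e \<and> v \<in> e)"
    using P unfolding projective_plane_def by auto
  have "card V \<ge> 2" using cV q by (simp add: power2_eq_square)
  then have "V \<noteq> {}" by auto
  then obtain v where v: "v \<in> V" by auto
  have "card {e\<in>E. v \<in> e} \<ge> 1" using deg v by auto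
  then have "{e\<in>E. v \<in> e} \<noteq> {}" by (metis card.empty not_one_le_zero)
  then obtain e0 where e0: "e0 \<in> E" "v \<in> e0" by blast
  have "card (e0 \<inter> S) = 1" using one e0 by auto
  then have "e0 \<inter> S \<noteq> {}" by (metis card.empty zero_neq_one)
  then obtain s where s: "s \<in> S" by blast
  have sV: "s \<in> V" using s S by auto
  have "\<exists>u\<in>V. u \<noteq> s"
  proof (rule ccontr)
    assume "\<not> ?thesis"
    then have "V \<subseteq> {s}" by auto
    then have "card V \<le> card {s}" by (intro card_mono) auto
    then have "card V \<le> 1" by simp
    with \<open>card V \<ge> 2\<close> show False by simp
  qed
  then obtain u where u: "u \<in> V" "u \<noteq> s" by auto
  have cu: "card {e\<in>E. u \<in> e} \<ge> 2" using deg u q by auto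
  have "\<exists>e1\<in>{e\<in>E. u \<in> e}. s \<notin> e1"
  proof (rule ccontr)
    assume "\<not> ?thesis"
    then have all: "\<forall>e\<in>{e\<in>E. u \<in> e}. s \<in> e" by auto
    obtain l where l: "l \<in> E" "u \<in> l" "s \<in> l" "\<forall>e. e \<in> E \<and> u \<in> e \<and> s \<in> e \<longrightarrow> e = l"
      using uniq u sV by metis
    have "{e\<in>E. u \<in> e} \<subseteq> {l}" using all l(4) by auto
    then have "card {e\<in>E. u \<in> e} \<le> card {l}" by (intro card_mono) auto
    then have "card {e\<in>E. u \<in> e} \<le> 1" by simp
    with cu show False by simp
  qed
  then obtain e1 where e1: "e1 \<in> E" "s \<notin> e1" by auto
  have "card (e1 \<inter> S) = 1" using one e1 by auto
  then have "e1 \<inter> S \<noteq> {}" by (metis card.empty zero_neq_one)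
  then obtain t where t: "t \<in> e1" "t \<in> S" by blast
  have ts: "t \<noteq> s" using t e1 by auto
  have tV: "t \<in> V" using t S by auto
  obtain l where l: "l \<in> E" "s \<in> l" "t \<in> l"
    using uniq sV tV ts by metis
  have finl: "finite l" using eV l(1) by (metis card.infinite add_is_0 one_neq_zero)
  have "{s,t} \<subseteq> l \<inter> S" using l s t by auto
  then have "card {s,t} \<le> card (l \<inter> S)" using finl by (meson card_mono finite_Int)
  then have "card (l \<inter> S) \<ge> 2" using ts by simp
  with one l(1) show False by auto
qed

lemma path_no_red:
  fixes f :: "nat \<Rightarrow> nat"
  assumes inj: "inj_on f {1..n}" and img: "f ` {1..n} \<subseteq> {0..<N}"
    and win: "\<forall>i. 1 \<le> i \<and> i + q \<le> n \<longrightarrow> card (f ` {i..i+q} \<inter> {n-1..}) \<noteq> 1"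
    and nq: "q + 1 \<le> n" and NB: "N + 1 < n + n div (q+1)"
  shows False
proof -
  define T where "T = {x\<in>{1..n}. n-1 \<le> f x}"
  define g where "g i = card (T \<inter> {i..i+q})" for i
  have finT: "finite T" unfolding T_def by simp
  have gw: "g i \<noteq> 1" if "1 \<le> i" "i + q \<le> n" for i
  proof -
    have sub: "{i..i+q} \<subseteq> {1..n}" using that by auto
    have "f ` {i..i+q} \<inter> {n-1..} = f ` (T \<inter> {i..i+q})" using sub unfolding T_def by auto
    moreover have "inj_on f (T \<inter> {i..i+q})" by (rule inj_on_subset[OF inj]) (auto simp: T_def)
    ultimately have "card (f ` {i..i+q} \<inter> {n-1..}) = g i" by (simp add: card_image g_def)
    with win that show ?thesis by auto
  qed
  have cins: "card (insert a A) \<le> card A + 1" if "finite A" for a and A :: "nat set"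
    using that by (simp add: card_insert_if)
  have st1: "g (i+1) \<le> g i + 1" for i
  proof -
    have "T \<inter> {i+1..i+1+q} \<subseteq> insert (i+1+q) (T \<inter> {i..i+q})" by auto
    then have "g (i+1) \<le> card (insert (i+1+q) (T \<inter> {i..i+q}))" unfolding g_def
      by (intro card_mono) auto
    also have "\<dots> \<le> g i + 1" unfolding g_def by (rule cins) simp
    finally show ?thesis .
  qed
  have st2: "g i \<le> g (i+1) + 1" for i
  proof -
    have "T \<inter> {i..i+q} \<subseteq> insert i (T \<inter> {i+1..i+1+q})" by auto
    then have "g i \<le> card (insert i (T \<inter> {i+1..i+1+q}))" unfolding g_def
      by (intro card_mono) auto
    also have "\<dots> \<le> g (i+1) + 1" unfolding g_def by (rule cins) simp
    finally show ?thesis .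
  qed
  have g1: "g 1 \<noteq> 1" using gw nq by auto
  show False
  proof (cases "g 1 = 0")
    case True
    have all0: "j + 1 + q \<le> n \<longrightarrow> g (j+1) = 0" for j
    proof (induction j)
      case 0 then show ?case using True by simp
    next
      case (Suc j)
      show ?case
      proof
        assume a: "Suc j + 1 + q \<le> n"
        then have "g (j+1) = 0" using Suc by simp
        then have "g (j+2) \<le> 1" using st1[of "j+1"] by simp
        moreover have "g (j+2) \<noteq> 1" using gw[of "j+2"] a by simp
        ultimately show "g (Suc j + 1) = 0" by simp
      qed
    qed
    have Te: "T = {}"
    proof (rule ccontr)
      assume "T \<noteq> {}"
      then obtain x where x: "x \<in> T" by auto
      then have x1: "1 \<le> x" "x \<le> n" unfolding T_def by auto
      define i where "i = min x (n-q)"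
      have i1: "1 \<le> i" "i + q \<le> n" "i \<le> x" "x \<le> i + q" using x1 nq unfolding i_def by auto
      have "g i = 0" using all0[of "i-1"] i1 by simp
      then have "T \<inter> {i..i+q} = {}" unfolding g_def using finT by simp
      with x i1 show False by auto
    qed
    have "f ` {1..n} \<subseteq> {0..<n-1}"
    proof
      fix y assume "y \<in> f ` {1..n}"
      then obtain x where "x \<in> {1..n}" "y = f x" by auto
      then show "y \<in> {0..<n-1}" using Te unfolding T_def by auto
    qed
    from card_inj_on_le[OF inj this] have "n \<le> n - 1" by simp
    then show False using nq by simp
  next
    case False
    then have g12: "g 1 \<ge> 2" using g1 by simp
    have all2: "j + 1 + q \<le> n \<longrightarrow> g (j+1) \<ge> 2" for j
    proof (induction j)
      case 0 then show ?case using g12 by simp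
    next
      case (Suc j)
      show ?case
      proof
        assume a: "Suc j + 1 + q \<le> n"
        then have "g (j+1) \<ge> 2" using Suc by simp
        then have "g (j+2) \<ge> 1" using st2[of "j+1"] by simp
        moreover have "g (j+2) \<noteq> 1" using gw[of "j+2"] a by simp
        ultimately show "g (Suc j + 1) \<ge> 2" by simp
      qed
    qed
    have cnt: "j * (q+1) \<le> n \<longrightarrow> card (T \<inter> {1..j*(q+1)}) \<ge> j" for j
    proof (induction j)
      case 0 then show ?case by simp
    next
      case (Suc j)
      show ?case
      proof
        assume a: "Suc j * (q+1) \<le> n"
        have IH: "card (T \<inter> {1..j*(q+1)}) \<ge> j" using Suc a by simp
        have eq: "T \<inter> {1..Suc j*(q+1)} = T \<inter> {1..j*(q+1)} \<union> T \<inter> {j*(q+1)+1..j*(q+1)+1+q}"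
          by auto
        have dis: "(T \<inter> {1..j*(q+1)}) \<inter> (T \<inter> {j*(q+1)+1..j*(q+1)+1+q}) = {}" by auto
        have "g (j*(q+1)+1) \<ge> 2" using all2[of "j*(q+1)"] a by simp
        then have c2: "card (T \<inter> {j*(q+1)+1..j*(q+1)+1+q}) \<ge> 1" unfolding g_def by simp
        have "card (T \<inter> {1..Suc j*(q+1)}) = card (T \<inter> {1..j*(q+1)}) + card (T \<inter> {j*(q+1)+1..j*(q+1)+1+q})"
          unfolding eq using dis finT by (intro card_Un_disjoint) auto
        then show "card (T \<inter> {1..Suc j*(q+1)}) \<ge> Suc j" using IH c2 by simp
      qed
    qed
    define m where "m = n div (q+1)"
    have "m * (q+1) \<le> n" unfolding m_def by (metis div_times_less_eq_dividend)
    then have "card (T \<inter> {1..m*(q+1)}) \<ge> m" using cnt by simp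
    moreover have "card (T \<inter> {1..m*(q+1)}) \<le> card T" using finT by (intro card_mono) auto
    ultimately have mT: "m \<le> card T" by simp
    have "inj_on f T" by (rule inj_on_subset[OF inj]) (auto simp: T_def)
    moreover have "f ` T \<subseteq> {n-1..<N}" using img unfolding T_def by (auto simp: image_subset_iff)
    ultimately have "card T \<le> card {n-1..<N}" by (rule card_inj_on_le) simp
    then have "m \<le> N - (n-1)" using mT by simp
    moreover have "m \<ge> 1" unfolding m_def using nq div_greater_zero_iff[of n "q+1"] by simp
    ultimately show False using NB nq unfolding m_def by linarith
  qed
qed

lemma plane_E_ne:
  assumes P: "projective_plane q V E"
  shows "E \<noteq> {}"
proof -
  have cV: "card V = q^2 + q + 1" and deg: "\<forall>v\<in>V. card {e\<in>E. v \<in> e} = q + 1"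
    using P unfolding projective_plane_def by auto
  have "V \<noteq> {}" using cV by auto
  then obtain v where v: "v \<in> V" by auto
  have "{e\<in>E. v \<in> e} \<noteq> {}" using deg v by (metis card.empty add_is_0 one_neq_zero)
  then show ?thesis by auto
qed

lemma floor_bound:
  fixes q n :: nat
  shows "nat \<lfloor>real (q+2) / real (q+1) * (real n - 1)\<rfloor> \<le> n - 1 + (n - 1) div (q+1)"
proof (cases "n = 0")
  case True
  have "real (q+2) / real (q+1) * (real n - 1) \<le> 0" using True by (simp add: divide_nonneg_nonneg)
  then have "\<lfloor>real (q+2) / real (q+1) * (real n - 1)\<rfloor> \<le> 0" by linarith
  then show ?thesis by simp
next
  case False
  define k where "k = q + 1"
  define d where "d = (n-1) div k"
  define r where "r = (n-1) mod k"
  have k0: "k > 0" unfolding k_def by simp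
  have nr: "n - 1 = d * k + r" unfolding d_def r_def by simp
  have rk: "r < k" unfolding r_def using k0 by simp
  have rn: "real n - 1 = real d * real k + real r" using nr False
    by (metis of_nat_1 of_nat_add of_nat_diff of_nat_mult less_one linorder_not_less)
  have "real (q+2) / real (q+1) * (real n - 1) = (real k + 1) / real k * (real n - 1)"
    unfolding k_def by simp
  also have "\<dots> = (real n - 1) + real d + real r / real k"
    using k0 unfolding rn by (simp add: field_simps)
  also have "\<dots> < (real n - 1) + real d + 1" using rk k0 by simp
  finally have "\<lfloor>real (q+2) / real (q+1) * (real n - 1)\<rfloor> < int (n - 1 + d) + 1"
    using False by (simp add: floor_less_iff of_nat_diff)
  then have "\<lfloor>real (q+2) / real (q+1) * (real n - 1)\<rfloor> \<le> int (n - 1 + d)" by linarith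
  then show ?thesis unfolding d_def k_def by linarith
qed

theorem corollary1p11:
  fixes q :: nat and V :: "'a set" and E :: "'a set set"
  assumes "q \<ge> 3" and "projective_plane q V E"
  shows "\<exists>n0. \<forall>n\<ge>n0. ramsey_number (tight_path (q+1) n) (V, E)
            \<ge> enat (nat \<lfloor>real (q+2) / real (q+1) * (real n - 1)\<rfloor>)"
proof (intro exI allI impI)
  fix n :: nat
  assume "n \<ge> 0"
  define M where "M = nat \<lfloor>real (q+2) / real (q+1) * (real n - 1)\<rfloor>"
  have MB: "M \<le> n - 1 + (n - 1) div (q+1)" unfolding M_def by (rule floor_bound)
  have Ene: "E \<noteq> {}" using plane_E_ne[OF assms(2)] .
  have "enat M \<le> ramsey_number (tight_path (q+1) n) (V, E)"
    unfolding ramsey_number_def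
  proof (rule Inf_greatest)
    fix x assume "x \<in> {enat N | N. \<forall>c :: nat set \<Rightarrow> bool.
       has_mono_copy N (tight_path (q+1) n) c True \<or> has_mono_copy N (V, E) c False}"
    then obtain N where x: "x = enat N" and HN: "\<forall>c :: nat set \<Rightarrow> bool.
       has_mono_copy N (tight_path (q+1) n) c True \<or> has_mono_copy N (V, E) c False" by blast
    show "enat M \<le> x"
    proof (rule ccontr)
      assume "\<not> enat M \<le> x"
      then have NM: "N < M" using x by simp
      show False
      proof (cases "N < n")
        case True
        from HN[rule_format, of "\<lambda>_. True"] show False
        proof
          assume "has_mono_copy N (tight_path (q+1) n) (\<lambda>_. True) True"
          then obtain f where f: "inj_on f {1..n}" "f ` {1..n} \<subseteq> {0..<N}"
            unfolding has_mono_copy_def tight_path_def by auto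
          from card_inj_on_le[OF f] have "n \<le> N" by simp
          with True show False by simp
        next
          assume "has_mono_copy N (V, E) (\<lambda>_. True) False"
          then have "\<forall>e\<in>E. False" unfolding has_mono_copy_def by auto
          with Ene show False by auto
        qed
      next
        case False
        define c where "c X = (card (X \<inter> {n-1..}) \<noteq> 1)" for X :: "nat set"
        have dl: "(n - 1) div (q+1) \<le> n div (q+1)" by (simp add: div_le_mono)
        have nq: "q + 1 \<le> n"
        proof (rule ccontr)
          assume "\<not> q + 1 \<le> n"
          then have "(n - 1) div (q+1) = 0" by simp
          with MB NM False show False by simp
        qed
        have NB: "N + 1 < n + n div (q+1)" using MB NM dl nq by linarith
        from HN[rule_format, of c] show False
        proof
          assume "has_mono_copy N (tight_path (q+1) n) c True"
          then obtain f where f: "inj_on f {1..n}" "f ` {1..n} \<subseteq> {0..<N}"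
            and ed: "\<forall>e\<in>{{i..i+(q+1)-1} | i. 1 \<le> i \<and> i + (q+1) - 1 \<le> n}. c (f ` e)"
            unfolding has_mono_copy_def tight_path_def by auto
          have win: "\<forall>i. 1 \<le> i \<and> i + q \<le> n \<longrightarrow> card (f ` {i..i+q} \<inter> {n-1..}) \<noteq> 1"
          proof (intro allI impI)
            fix i assume i: "1 \<le> i \<and> i + q \<le> n"
            then have "{i..i+q} \<in> {{i..i+(q+1)-1} | i. 1 \<le> i \<and> i + (q+1) - 1 \<le> n}" by auto
            with ed have "c (f ` {i..i+q})" by blast
            then show "card (f ` {i..i+q} \<inter> {n-1..}) \<noteq> 1" unfolding c_def .
          qed
          show False by (rule path_no_red[OF f win nq NB])
        next
          assume "has_mono_copy N (V, E) c False"
          then obtain f where f: "inj_on f V" and ed: "\<forall>e\<in>E. \<not> c (f ` e)"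
            unfolding has_mono_copy_def by auto
          define S where "S = {v\<in>V. n - 1 \<le> f v}"
          have eV: "\<forall>e\<in>E. e \<subseteq> V" using assms(2) unfolding projective_plane_def by auto
          have "\<forall>e\<in>E. card (e \<inter> S) = 1"
          proof
            fix e assume e: "e \<in> E"
            have "f ` e \<inter> {n-1..} = f ` (e \<inter> S)" using eV e unfolding S_def by auto
            moreover have "inj_on f (e \<inter> S)" by (rule inj_on_subset[OF f]) (auto simp: S_def)
            ultimately have "card (f ` e \<inter> {n-1..}) = card (e \<inter> S)" by (simp add: card_image)
            moreover have "card (f ` e \<inter> {n-1..}) = 1" using ed e unfolding c_def by auto
            ultimately show "card (e \<inter> S) = 1" by simp
          qed
          moreover have "S \<subseteq> V" unfolding S_def by auto
          ultimately show False using plane_no_exact_one[OF assms(2)] assms(1) by auto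
        qed
      qed
    qed
  qed
  then show "enat M \<le> ramsey_number (tight_path (q+1) n) (V, E)" .
qed

end
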